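(* Let $G$ be a finite group. For every proper subgroup $H\subsetneq G$, the set $f_{G-H}=\bigcup_{g\in G-H}\{\{a,ag\}\mid a\in G\}$ is the set of bases of a rank-$2$ matroid on the ground set $G$ (which is invariant under left multiplication). Conversely, every rank-$2$ matroid on the ground set $G$ whose set of bases is invariant under left multiplication by $G$ has set of bases $f_{G-H}$ for a unique proper subgroup $H$ of $G$. Consequently, two-dimensional tropical subrepresentations of the boolean regular representation $\mathbb{B}[G]$ correspond bijectively to proper subgroups of $G$.
   Context: $G$ acts on $\binom{G}{2}$ (2-element subsets of $G$) by $x\cdot\{a,b\}=\{xa,xb\}$. For $g\in G$, $f_g=\{\{a,ag\}\mid a\in G\}$ ($f_e=\emptyset$), and for $S\subseteq G$, $f_S=\bigcup_{g\in S}f_g$. Over the boolean semifield $\mathbb{B}=\{0,1\}$, $\mathbb{B}[G]$ is the free $\mathbb{B}$-module with basis $\{\mathbf{e}_g\}_{g\in G}$ and $G$ acting by $x\cdot\mathbf{e}_a=\mathbf{e}_{xa}$; its $d$-dimensional tropical subrepresentations are equivalent to rank-$d$ matroids on the ground set $G$ whose set of bases is invariant under the induced action of $G$ on $\binom{G}{d}$. *)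

theory Defs
  imports "HOL-Algebra.Group"
begin

definition matroid_bases :: "'a set \<Rightarrow> 'a set set \<Rightarrow> bool" where
  "matroid_bases E \<B> \<longleftrightarrow> finite E \<and> \<B> \<noteq> {} \<and> (\<forall>B\<in>\<B>. B \<subseteq> E) \<and>
     (\<forall>B1\<in>\<B>. \<forall>B2\<in>\<B>. \<forall>x\<in>B1 - B2. \<exists>y\<in>B2 - B1. insert y (B1 - {x}) \<in> \<B>)"

definition rank_matroid_bases :: "nat \<Rightarrow> 'a set \<Rightarrow> 'a set set \<Rightarrow> bool" where
  "rank_matroid_bases d E \<B> \<longleftrightarrow> matroid_bases E \<B> \<and> (\<forall>B\<in>\<B>. card B = d)"

definition left_invariant :: "('g, 'b) monoid_scheme \<Rightarrow> 'g set set \<Rightarrow> bool" where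
  "left_invariant G \<B> \<longleftrightarrow> (\<forall>x\<in>carrier G. \<forall>B\<in>\<B>. (\<lambda>a. x \<otimes>\<^bsub>G\<^esub> a) ` B \<in> \<B>)"

definition f_elem :: "('g, 'b) monoid_scheme \<Rightarrow> 'g \<Rightarrow> 'g set set" where
  "f_elem G g = (if g = \<one>\<^bsub>G\<^esub> then {} else {{a, a \<otimes>\<^bsub>G\<^esub> g} | a. a \<in> carrier G})"

definition f_set :: "('g, 'b) monoid_scheme \<Rightarrow> 'g set \<Rightarrow> 'g set set" where
  "f_set G S = (\<Union>g\<in>S. f_elem G g)"

end

theory Submission
  imports Defs
begin

context group
begin

lemma mem_fset:
  assumes H: "subgroup H G"
  shows "S \<in> f_set G (carrier G - H) \<longleftrightarrow>
     (\<exists>a\<in>carrier G. \<exists>b\<in>carrier G. S = {a,b} \<and> inv a \<otimes> b \<notin> H)"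
proof
  assume "S \<in> f_set G (carrier G - H)"
  then obtain g where g: "g \<in> carrier G" "g \<notin> H" and S: "S \<in> f_elem G g"
    unfolding f_set_def by auto
  have "g \<noteq> \<one>" using g H subgroup.one_closed by blast
  then obtain a where a: "a \<in> carrier G" "S = {a, a \<otimes> g}" using S unfolding f_elem_def by auto
  have "inv a \<otimes> (a \<otimes> g) = g" using a g by (simp add: m_assoc[symmetric])
  then show "\<exists>a\<in>carrier G. \<exists>b\<in>carrier G. S = {a,b} \<and> inv a \<otimes> b \<notin> H"
    using a g by (intro bexI[of _ a] bexI[of _ "a \<otimes> g"]) auto
next
  assume "\<exists>a\<in>carrier G. \<exists>b\<in>carrier G. S = {a,b} \<and> inv a \<otimes> b \<notin> H"
  then obtain a b where ab: "a \<in> carrier G" "b \<in> carrier G" "S = {a,b}" "inv a \<otimes> b \<notin> H" by blast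
  define g where "g = inv a \<otimes> b"
  have g: "g \<in> carrier G" "g \<notin> H" using ab g_def by auto
  have "g \<noteq> \<one>" using g H subgroup.one_closed by blast
  have "a \<otimes> g = b" using ab unfolding g_def by (simp add: m_assoc[symmetric])
  then have "S \<in> f_elem G g" using ab \<open>g \<noteq> \<one>\<close> unfolding f_elem_def by auto
  then show "S \<in> f_set G (carrier G - H)" using g unfolding f_set_def by auto
qed

lemma pair_in_fset:
  assumes H: "subgroup H G" and h: "h \<in> carrier G"
  shows "{\<one>, h} \<in> f_set G (carrier G - H) \<longleftrightarrow> h \<notin> H"
proof
  assume "{\<one>, h} \<in> f_set G (carrier G - H)"
  then obtain a b where ab: "a \<in> carrier G" "b \<in> carrier G" "{\<one>,h} = {a,b}" "inv a \<otimes> b \<notin> H"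
    using mem_fset[OF H] by blast
  show "h \<notin> H"
  proof
    assume hH: "h \<in> H"
    from ab(3) have "(a = \<one> \<and> b = h) \<or> (a = h \<and> b = \<one>)" by (auto simp: doubleton_eq_iff)
    then show False using ab hH H h
      by (auto simp: subgroup.m_inv_closed)
  qed
next
  assume "h \<notin> H"
  then show "{\<one>, h} \<in> f_set G (carrier G - H)" using mem_fset[OF H] h
    by (intro iffD2[OF mem_fset[OF H]] bexI[of _ \<one>] bexI[of _ h]) auto
qed

lemma R_sym:
  assumes H: "subgroup H G" and a: "a \<in> carrier G" and b: "b \<in> carrier G"
    and "inv a \<otimes> b \<notin> H"
  shows "inv b \<otimes> a \<notin> H"
proof
  assume h: "inv b \<otimes> a \<in> H"
  have 1: "inv (inv b \<otimes> a) \<in> H" by (rule subgroup.m_inv_closed[OF H h])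
  have 2: "inv (inv b \<otimes> a) = inv a \<otimes> b" using a b by (simp add: inv_mult_group)
  have "inv a \<otimes> b \<in> H" using 1 unfolding 2 .
  then show False using assms(4) by contradiction
qed

lemma R_trans:
  assumes H: "subgroup H G" and a: "a \<in> carrier G" and b: "b \<in> carrier G" and c: "c \<in> carrier G"
    and "inv a \<otimes> b \<in> H" "inv b \<otimes> c \<in> H"
  shows "inv a \<otimes> c \<in> H"
proof -
  have "(inv a \<otimes> b) \<otimes> (inv b \<otimes> c) \<in> H" by (rule subgroup.m_closed[OF H assms(5,6)])
  moreover have "(inv a \<otimes> b) \<otimes> (inv b \<otimes> c) = inv a \<otimes> c"
    using a b c by (simp add: m_assoc) (simp add: m_assoc[symmetric])
  ultimately show ?thesis by simp
qed

lemma part1: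
  assumes fin: "finite (carrier G)" and H: "subgroup H G" and Hne: "H \<noteq> carrier G"
  shows "rank_matroid_bases 2 (carrier G) (f_set G (carrier G - H)) \<and>
            left_invariant G (f_set G (carrier G - H))"
proof -
  let ?B = "f_set G (carrier G - H)"
  have HG: "H \<subseteq> carrier G" using H subgroup.subset by blast
  obtain g where g: "g \<in> carrier G" "g \<notin> H" using HG Hne by blast
  have ne: "?B \<noteq> {}" using pair_in_fset[OF H g(1)] g by blast
  have sub: "\<forall>S\<in>?B. S \<subseteq> carrier G" using mem_fset[OF H] by auto
  have card: "\<forall>S\<in>?B. card S = 2"
  proof
    fix S assume "S \<in> ?B"
    then obtain a b where ab: "a \<in> carrier G" "b \<in> carrier G" "S = {a,b}" "inv a \<otimes> b \<notin> H"
      using mem_fset[OF H] by blast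
    have "a \<noteq> b"
    proof
      assume "a = b" then have "inv a \<otimes> b = \<one>" using ab by simp
      then show False using ab H subgroup.one_closed by metis
    qed
    then show "card S = 2" using ab by simp
  qed
  have exch: "\<forall>B1\<in>?B. \<forall>B2\<in>?B. \<forall>x\<in>B1 - B2. \<exists>y\<in>B2 - B1. insert y (B1 - {x}) \<in> ?B"
  proof (intro ballI)
    fix B1 B2 x assume B1: "B1 \<in> ?B" and B2: "B2 \<in> ?B" and x: "x \<in> B1 - B2"
    obtain a b where ab: "a \<in> carrier G" "b \<in> carrier G" "B1 = {a,b}" "inv a \<otimes> b \<notin> H"
      using mem_fset[OF H] B1 by blast
    obtain z where z: "z \<in> carrier G" "B1 = {x,z}" "inv x \<otimes> z \<notin> H"
    proof (cases "x = a")
      case True then show ?thesis using that ab by blast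
    next
      case False then have "x = b" using x ab by auto
      then show ?thesis using that[of a] ab R_sym[OF H] by (auto simp: insert_commute)
    qed
    have xG: "x \<in> carrier G" using x ab by auto
    have xz: "x \<noteq> z"
    proof
      assume "x = z" then have "inv x \<otimes> z = \<one>" using xG by simp
      then show False using z H subgroup.one_closed by metis
    qed
    have B1x: "B1 - {x} = {z}" using z xz by auto
    obtain c d where cd: "c \<in> carrier G" "d \<in> carrier G" "B2 = {c,d}" "inv c \<otimes> d \<notin> H"
      using mem_fset[OF H] B2 by blast
    obtain y where y: "y \<in> B2" "y \<in> carrier G" "inv z \<otimes> y \<notin> H"
    proof (cases "inv z \<otimes> c \<in> H")
      case True
      have "inv z \<otimes> d \<notin> H"
      proof
        assume "inv z \<otimes> d \<in> H"
        then have "inv c \<otimes> z \<in> H" using True R_sym[OF H cd(1) z(1)] by blast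
        then show False using R_trans[OF H cd(1) z(1) cd(2)] \<open>inv z \<otimes> d \<in> H\<close> cd by blast
      qed
      then show ?thesis using that cd by blast
    next
      case False then show ?thesis using that cd by blast
    qed
    have yz: "y \<noteq> z"
    proof
      assume "y = z" then have "inv z \<otimes> y = \<one>" using y by simp
      then show False using y H subgroup.one_closed by metis
    qed
    have "y \<noteq> x" using x y by auto
    have "insert y (B1 - {x}) \<in> ?B"
      unfolding B1x using mem_fset[OF H] y z R_sym[OF H z(1) y(2)] by blast
    then show "\<exists>y\<in>B2 - B1. insert y (B1 - {x}) \<in> ?B"
      using y yz \<open>y \<noteq> x\<close> z by (intro bexI[of _ y]) auto
  qed
  have inv: "left_invariant G ?B"
    unfolding left_invariant_def
  proof (intro ballI)
    fix x S assume x: "x \<in> carrier G" and S: "S \<in> ?B"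
    obtain a b where ab: "a \<in> carrier G" "b \<in> carrier G" "S = {a,b}" "inv a \<otimes> b \<notin> H"
      using mem_fset[OF H] S by blast
    have "inv (x \<otimes> a) \<otimes> (x \<otimes> b) = inv a \<otimes> b"
      using x ab by (simp add: inv_mult_group m_assoc) (simp add: m_assoc[symmetric])
    moreover have "(\<lambda>y. x \<otimes> y) ` S = {x \<otimes> a, x \<otimes> b}" using ab by simp
    ultimately show "(\<lambda>y. x \<otimes> y) ` S \<in> ?B"
      using ab x by (intro iffD2[OF mem_fset[OF H]] bexI[of _ "x \<otimes> a"] bexI[of _ "x \<otimes> b"]) auto
  qed
  have "matroid_bases (carrier G) ?B" unfolding matroid_bases_def
    using fin ne sub exch by (intro conjI)
  then show ?thesis unfolding rank_matroid_bases_def using card inv by (intro conjI)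
qed

lemma fset_inj:
  assumes H: "subgroup H G" and H': "subgroup H' G"
    and eq: "f_set G (carrier G - H) = f_set G (carrier G - H')"
  shows "H = H'"
proof -
  have "H \<subseteq> carrier G" "H' \<subseteq> carrier G" using H H' subgroup.subset by blast+
  moreover have "\<forall>h\<in>carrier G. h \<in> H \<longleftrightarrow> h \<in> H'"
    using pair_in_fset[OF H] pair_in_fset[OF H'] eq by blast
  ultimately show ?thesis by blast
qed

lemma part2:
  assumes M: "rank_matroid_bases 2 (carrier G) \<B>" and LI: "left_invariant G \<B>"
  shows "\<exists>H. subgroup H G \<and> H \<noteq> carrier G \<and> \<B> = f_set G (carrier G - H)"
proof -
  have ne: "\<B> \<noteq> {}" and sub: "\<forall>S\<in>\<B>. S \<subseteq> carrier G" and card: "\<forall>S\<in>\<B>. card S = 2"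
    and exch: "\<forall>B1\<in>\<B>. \<forall>B2\<in>\<B>. \<forall>x\<in>B1 - B2. \<exists>y\<in>B2 - B1. insert y (B1 - {x}) \<in> \<B>"
    using M unfolding rank_matroid_bases_def matroid_bases_def by blast+
  have form: "\<exists>a b. a \<in> carrier G \<and> b \<in> carrier G \<and> a \<noteq> b \<and> S = {a,b}" if "S \<in> \<B>" for S
  proof -
    have "card S = 2" using card that by blast
    then obtain a b where ab: "S = {a,b}" "a \<noteq> b" unfolding card_2_iff by blast
    have "S \<subseteq> carrier G" using sub that by blast
    then have "a \<in> carrier G" "b \<in> carrier G" using ab by auto
    then show ?thesis using ab by blast
  qed
  have transl: "{x \<otimes> a, x \<otimes> b} \<in> \<B>" if "{a,b} \<in> \<B>" "x \<in> carrier G" for x a b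
  proof -
    have "(\<lambda>y. x \<otimes> y) ` {a,b} \<in> \<B>" using LI that unfolding left_invariant_def by blast
    then show ?thesis by simp
  qed
  have transl_iff: "{x \<otimes> a, x \<otimes> b} \<in> \<B> \<longleftrightarrow> {a,b} \<in> \<B>"
    if "a \<in> carrier G" "b \<in> carrier G" "x \<in> carrier G" for x a b
  proof
    assume "{x \<otimes> a, x \<otimes> b} \<in> \<B>"
    then have "{inv x \<otimes> (x \<otimes> a), inv x \<otimes> (x \<otimes> b)} \<in> \<B>" using transl that by blast
    then show "{a,b} \<in> \<B>" using that by (simp add: m_assoc[symmetric])
  qed (use transl that in blast)
  have single: "{a} \<notin> \<B>" for a using card by fastforce
  have trans: "{a,c} \<notin> \<B>" if "a \<in> carrier G" "b \<in> carrier G" "c \<in> carrier G"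
    "{a,b} \<notin> \<B>" "{b,c} \<notin> \<B>" for a b c
  proof
    assume ac: "{a,c} \<in> \<B>"
    obtain p q where pq: "p \<in> carrier G" "q \<in> carrier G" "p \<noteq> q" "{p,q} \<in> \<B>"
      using ne form by blast
    define d where "d = b \<otimes> inv p \<otimes> q"
    have "{(b \<otimes> inv p) \<otimes> p, (b \<otimes> inv p) \<otimes> q} \<in> \<B>" using transl pq that by blast
    then have bd: "{b, d} \<in> \<B>" unfolding d_def using pq that by (simp add: m_assoc)
    have "b \<noteq> d" using bd single by fastforce
    have "d \<noteq> a" using bd that by (auto simp: insert_commute)
    moreover have "d \<noteq> c" using bd that by auto
    ultimately have "d \<in> {b,d} - {a,c}" by blast
    then obtain y where y: "y \<in> {a,c} - {b,d}" "insert y ({b,d} - {d}) \<in> \<B>"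
      using exch bd ac by blast
    have "{b,d} - {d} = {b}" using \<open>b \<noteq> d\<close> by auto
    then have "{y, b} \<in> \<B>" using y by simp
    then show False using y that by (auto simp: insert_commute)
  qed
  define H where "H = {h \<in> carrier G. {\<one>, h} \<notin> \<B>}"
  have HG: "H \<subseteq> carrier G" unfolding H_def by blast
  have oneH: "\<one> \<in> H" unfolding H_def using single by simp
  have subH: "subgroup H G"
  proof (rule subgroupI)
    show "H \<subseteq> carrier G" by (rule HG)
    show "H \<noteq> {}" using oneH by blast
  next
    fix h assume h: "h \<in> H"
    then have hG: "h \<in> carrier G" and nb: "{\<one>, h} \<notin> \<B>" unfolding H_def by auto
    have "{inv h \<otimes> \<one>, inv h \<otimes> h} \<notin> \<B>" using transl_iff[of \<one> h "inv h"] hG nb by simp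
    then have "{\<one>, inv h} \<notin> \<B>" using hG by (simp add: insert_commute)
    then show "inv h \<in> H" unfolding H_def using hG by simp
  next
    fix h k assume h: "h \<in> H" and k: "k \<in> H"
    then have hG: "h \<in> carrier G" "{\<one>, h} \<notin> \<B>" and kG: "k \<in> carrier G" "{\<one>, k} \<notin> \<B>"
      unfolding H_def by auto
    have "{h \<otimes> \<one>, h \<otimes> k} \<notin> \<B>" using transl_iff[of \<one> k h] hG kG by simp
    then have "{h, h \<otimes> k} \<notin> \<B>" using hG by simp
    then have "{\<one>, h \<otimes> k} \<notin> \<B>" using trans[of \<one> h "h \<otimes> k"] hG kG by simp
    then show "h \<otimes> k \<in> H" unfolding H_def using hG kG by simp
  qed
  have key: "{a,b} \<in> \<B> \<longleftrightarrow> inv a \<otimes> b \<notin> H" if "a \<in> carrier G" "b \<in> carrier G" for a b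
  proof -
    have "{a,b} \<in> \<B> \<longleftrightarrow> {inv a \<otimes> a, inv a \<otimes> b} \<in> \<B>" using transl_iff[of a b "inv a"] that by simp
    also have "\<dots> \<longleftrightarrow> {\<one>, inv a \<otimes> b} \<in> \<B>" using that by simp
    also have "\<dots> \<longleftrightarrow> inv a \<otimes> b \<notin> H" unfolding H_def using that by simp
    finally show ?thesis .
  qed
  have Hne: "H \<noteq> carrier G"
  proof
    assume "H = carrier G"
    obtain p q where pq: "p \<in> carrier G" "q \<in> carrier G" "{p,q} \<in> \<B>"
      using ne form by blast
    then show False using key \<open>H = carrier G\<close> by auto
  qed
  have "\<B> = f_set G (carrier G - H)"
  proof
    show "\<B> \<subseteq> f_set G (carrier G - H)"
    proof
      fix S assume S: "S \<in> \<B>"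
      then obtain a b where ab: "a \<in> carrier G" "b \<in> carrier G" "S = {a,b}" using form by blast
      then have "inv a \<otimes> b \<notin> H" using key S by blast
      then show "S \<in> f_set G (carrier G - H)" using ab mem_fset[OF subH] by blast
    qed
  next
    show "f_set G (carrier G - H) \<subseteq> \<B>"
    proof
      fix S assume "S \<in> f_set G (carrier G - H)"
      then obtain a b where ab: "a \<in> carrier G" "b \<in> carrier G" "S = {a,b}" "inv a \<otimes> b \<notin> H"
        using mem_fset[OF subH] by blast
      then show "S \<in> \<B>" using key by blast
    qed
  qed
  then show ?thesis using subH Hne by blast
qed

end

theorem mainTheorem5:
  fixes G :: "('g, 'b) monoid_scheme"
  assumes "group G" and "finite (carrier G)"
  shows "(\<forall>H. subgroup H G \<and> H \<noteq> carrier G \<longrightarrow>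
            rank_matroid_bases 2 (carrier G) (f_set G (carrier G - H)) \<and>
            left_invariant G (f_set G (carrier G - H)))
       \<and> (\<forall>\<B>. rank_matroid_bases 2 (carrier G) \<B> \<and> left_invariant G \<B> \<longrightarrow>
            (\<exists>!H. subgroup H G \<and> H \<noteq> carrier G \<and> \<B> = f_set G (carrier G - H)))
       \<and> bij_betw (\<lambda>H. f_set G (carrier G - H))
            {H. subgroup H G \<and> H \<noteq> carrier G}
            {\<B>. rank_matroid_bases 2 (carrier G) \<B> \<and> left_invariant G \<B>}"
proof -
  interpret group G by (rule assms(1))
  have P1: "\<forall>H. subgroup H G \<and> H \<noteq> carrier G \<longrightarrow>
            rank_matroid_bases 2 (carrier G) (f_set G (carrier G - H)) \<and>
            left_invariant G (f_set G (carrier G - H))"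
  proof (intro allI impI)
    fix H assume h: "subgroup H G \<and> H \<noteq> carrier G"
    then have h1: "subgroup H G" and h2: "H \<noteq> carrier G" by simp_all
    show "rank_matroid_bases 2 (carrier G) (f_set G (carrier G - H)) \<and>
            left_invariant G (f_set G (carrier G - H))"
      by (rule part1[OF assms(2) h1 h2])
  qed
  have ex: "\<exists>H. subgroup H G \<and> H \<noteq> carrier G \<and> \<B> = f_set G (carrier G - H)"
    if A: "rank_matroid_bases 2 (carrier G) \<B> \<and> left_invariant G \<B>" for \<B>
  proof -
    from A have r: "rank_matroid_bases 2 (carrier G) \<B>" and l: "left_invariant G \<B>" by simp_all
    show ?thesis by (rule part2[OF r l])
  qed
  have uniq: "H' = H" if "subgroup H G \<and> H \<noteq> carrier G \<and> \<B> = f_set G (carrier G - H)"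
     "subgroup H' G \<and> H' \<noteq> carrier G \<and> \<B> = f_set G (carrier G - H')" for \<B> H H'
  proof -
    from that have s1: "subgroup H G" and s2: "subgroup H' G"
      and e: "f_set G (carrier G - H') = f_set G (carrier G - H)" by simp_all
    show ?thesis by (rule fset_inj[OF s2 s1 e])
  qed
  have P2: "\<forall>\<B>. rank_matroid_bases 2 (carrier G) \<B> \<and> left_invariant G \<B> \<longrightarrow>
            (\<exists>!H. subgroup H G \<and> H \<noteq> carrier G \<and> \<B> = f_set G (carrier G - H))"
  proof (intro allI impI)
    fix \<B> assume A: "rank_matroid_bases 2 (carrier G) \<B> \<and> left_invariant G \<B>"
    from ex[OF A] obtain H where H: "subgroup H G \<and> H \<noteq> carrier G \<and> \<B> = f_set G (carrier G - H)"
      by (elim exE)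
    show "\<exists>!H. subgroup H G \<and> H \<noteq> carrier G \<and> \<B> = f_set G (carrier G - H)"
    proof (rule ex1I[of _ H])
      show "subgroup H G \<and> H \<noteq> carrier G \<and> \<B> = f_set G (carrier G - H)" by (rule H)
    next
      fix H' assume H': "subgroup H' G \<and> H' \<noteq> carrier G \<and> \<B> = f_set G (carrier G - H')"
      show "H' = H" by (rule uniq[OF H H'])
    qed
  qed
  have P3: "bij_betw (\<lambda>H. f_set G (carrier G - H))
            {H. subgroup H G \<and> H \<noteq> carrier G}
            {\<B>. rank_matroid_bases 2 (carrier G) \<B> \<and> left_invariant G \<B>}"
    unfolding bij_betw_def
  proof (intro conjI)
    show "inj_on (\<lambda>H. f_set G (carrier G - H)) {H. subgroup H G \<and> H \<noteq> carrier G}"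
    proof (rule inj_onI)
      fix H H' assume "H \<in> {H. subgroup H G \<and> H \<noteq> carrier G}" "H' \<in> {H. subgroup H G \<and> H \<noteq> carrier G}"
        and e: "f_set G (carrier G - H) = f_set G (carrier G - H')"
      then have "subgroup H G" "subgroup H' G" by simp_all
      then show "H = H'" using fset_inj e by blast
    qed
    show "(\<lambda>H. f_set G (carrier G - H)) ` {H. subgroup H G \<and> H \<noteq> carrier G} =
      {\<B>. rank_matroid_bases 2 (carrier G) \<B> \<and> left_invariant G \<B>}"
    proof
      show "(\<lambda>H. f_set G (carrier G - H)) ` {H. subgroup H G \<and> H \<noteq> carrier G} \<subseteq>
        {\<B>. rank_matroid_bases 2 (carrier G) \<B> \<and> left_invariant G \<B>}"
      proof
        fix S assume "S \<in> (\<lambda>H. f_set G (carrier G - H)) ` {H. subgroup H G \<and> H \<noteq> carrier G}"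
        then obtain H where "subgroup H G \<and> H \<noteq> carrier G" and S: "S = f_set G (carrier G - H)" by blast
        then have "rank_matroid_bases 2 (carrier G) S \<and> left_invariant G S" using P1 by simp
        then show "S \<in> {\<B>. rank_matroid_bases 2 (carrier G) \<B> \<and> left_invariant G \<B>}" by simp
      qed
      show "{\<B>. rank_matroid_bases 2 (carrier G) \<B> \<and> left_invariant G \<B>} \<subseteq>
        (\<lambda>H. f_set G (carrier G - H)) ` {H. subgroup H G \<and> H \<noteq> carrier G}"
      proof
        fix \<B> assume "\<B> \<in> {\<B>. rank_matroid_bases 2 (carrier G) \<B> \<and> left_invariant G \<B>}"
        then have A: "rank_matroid_bases 2 (carrier G) \<B> \<and> left_invariant G \<B>" by simp
        from ex[OF A] obtain H where H: "subgroup H G \<and> H \<noteq> carrier G \<and> \<B> = f_set G (carrier G - H)"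
          by (elim exE)
        then have "H \<in> {H. subgroup H G \<and> H \<noteq> carrier G}" "\<B> = f_set G (carrier G - H)" by simp_all
        then show "\<B> \<in> (\<lambda>H. f_set G (carrier G - H)) ` {H. subgroup H G \<and> H \<noteq> carrier G}"
          by (rule rev_image_eqI)
      qed
    qed
  qed
  from P1 P2 P3 show ?thesis by (intro conjI)
qed

end
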